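(* Let $q\in\mathrm{prob}(\{0,1\}^2)$. Then $E_\le:=\{\chi^{(1)}_{1|1}:(\pi,\chi)\in\Theta_2,\ \mu(\pi,\chi)=q,\ \chi^{(1)}_{0|0}\le\chi^{(2)}_{0|0}\}\subseteq\left[0,\min\left\{\frac{q_{1+}}{q_{+1}},1\right\}\right]$, with the conventions $x/0:=\infty$ for $x>0$ and $\frac{q_{1+}}{q_{+1}}:=1$ in the case $q_{1+}=q_{+1}=0$ (equivalently $q_{00}=1$).
   Context: A subscript $+$ denotes summation over the replaced index: $q_{1+}=q_{10}+q_{11}$, $q_{+1}=q_{01}+q_{11}$. $\mathrm{prob}(\mathcal{X})$ is the set of probability densities on a finite set $\mathcal{X}$; $\mathrm{markov}(\mathcal{X},\mathcal{Y})$ the set of maps $(x,y)\mapsto p_{y|x}$ with $p_{\cdot|x}\in\mathrm{prob}(\mathcal{Y})$. $\Theta_2:=\mathrm{prob}(\{0,1\})\times\mathrm{markov}(\{0,1\},\{0,1\}^2)$, $\mu(\pi,\chi)_j:=\sum_{i=0}^1\pi_i\chi_{j|i}$ for $j\in\{0,1\}^2$, $\chi^{(1)}_{\iota|i}:=\chi_{\iota0|i}+\chi_{\iota1|i}$, $\chi^{(2)}_{\iota|i}:=\chi_{0\iota|i}+\chi_{1\iota|i}$. *)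

theory Defs
  imports Complex_Main
begin

definition prob_on :: "'a set \<Rightarrow> ('a \<Rightarrow> real) \<Rightarrow> bool" where
  "prob_on X p \<longleftrightarrow> (\<forall>x\<in>X. 0 \<le> p x) \<and> sum p X = 1"

text \<open>Markov kernels: chi y x stands for chi_{y|x}.\<close>
definition markov_on :: "'x set \<Rightarrow> 'y set \<Rightarrow> ('y \<Rightarrow> 'x \<Rightarrow> real) \<Rightarrow> bool" where
  "markov_on X Y chi \<longleftrightarrow> (\<forall>x\<in>X. prob_on Y (\<lambda>y. chi y x))"

definition bits :: "nat set" where "bits = {0, 1}"

definition Theta2 :: "(nat \<Rightarrow> real) \<Rightarrow> (nat \<times> nat \<Rightarrow> nat \<Rightarrow> real) \<Rightarrow> bool" where
  "Theta2 p chi \<longleftrightarrow> prob_on bits p \<and> markov_on bits (bits \<times> bits) chi"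

definition mu :: "(nat \<Rightarrow> real) \<Rightarrow> (nat \<times> nat \<Rightarrow> nat \<Rightarrow> real) \<Rightarrow> nat \<times> nat \<Rightarrow> real" where
  "mu p chi j = (\<Sum>i\<in>bits. p i * chi j i)"

definition chi1 :: "(nat \<times> nat \<Rightarrow> nat \<Rightarrow> real) \<Rightarrow> nat \<Rightarrow> nat \<Rightarrow> real" where
  "chi1 chi \<iota> i = chi (\<iota>, 0) i + chi (\<iota>, 1) i"

definition chi2 :: "(nat \<times> nat \<Rightarrow> nat \<Rightarrow> real) \<Rightarrow> nat \<Rightarrow> nat \<Rightarrow> real" where
  "chi2 chi \<iota> i = chi (0, \<iota>) i + chi (1, \<iota>) i"

definition E_le :: "(nat \<times> nat \<Rightarrow> real) \<Rightarrow> real set" where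
  "E_le q = {chi1 chi 1 1 | p chi. Theta2 p chi \<and> (\<forall>j\<in>bits \<times> bits. mu p chi j = q j)
                              \<and> chi1 chi 0 0 \<le> chi2 chi 0 0}"

text \<open>min{q_{1+}/q_{+1}, 1} with x/0 = infinity for x>0 and 0/0 := 1 here;
  in both cases with q_{+1} = 0 the value is 1.\<close>
definition upper_bound :: "(nat \<times> nat \<Rightarrow> real) \<Rightarrow> real" where
  "upper_bound q = (let a = q (1,0) + q (1,1); b = q (0,1) + q (1,1) in
                     if b = 0 then 1 else min (a / b) 1)"

end

theory Submission
  imports Defs
begin

lemma sum_bits: "sum f bits = f 0 + f (1::nat)" by (simp add: bits_def)
lemma sum_bits2: "sum g (bits \<times> bits) = g (0,0) + g (0,1) + g (1,0) + g (1::nat,1::nat)"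
  by (simp add: bits_def add.assoc)

theorem lemma11:
  fixes q :: "nat \<times> nat \<Rightarrow> real"
  assumes "prob_on (bits \<times> bits) q"
  shows "E_le q \<subseteq> {0 .. upper_bound q}"
proof
  fix x assume "x \<in> E_le q"
  then obtain p chi where x: "x = chi1 chi 1 1" and th: "Theta2 p chi"
    and m: "\<forall>j\<in>bits \<times> bits. mu p chi j = q j" and c: "chi1 chi 0 0 \<le> chi2 chi 0 0"
    unfolding E_le_def by blast
  have b: "(0::nat) \<in> bits" "(1::nat) \<in> bits" by (auto simp: bits_def)
  from th have p0: "p 0 \<ge> 0" "p 1 \<ge> 0" and ps: "p 0 + p 1 = 1"
    by (auto simp: Theta2_def prob_on_def sum_bits bits_def)
  from th b have k: "\<And>i y. i \<in> bits \<Longrightarrow> y \<in> bits \<times> bits \<Longrightarrow> chi y i \<ge> 0"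
    and ks: "\<And>i. i \<in> bits \<Longrightarrow> chi (0,0) i + chi (0,1) i + chi (1,0) i + chi (1,1) i = 1"
    by (auto simp: Theta2_def markov_on_def prob_on_def sum_bits2)
  have k0: "chi (a,b') 0 \<ge> 0" "chi (a,b') 1 \<ge> 0" if "a \<in> bits" "b' \<in> bits" for a b'
    using k b that by auto
  note kk = k0[OF b(1) b(1)] k0[OF b(1) b(2)] k0[OF b(2) b(1)] k0[OF b(2) b(2)]
  note ks0 = ks[OF b(1)] and ks1 = ks[OF b(2)]
  have mq: "q j = p 0 * chi j 0 + p 1 * chi j 1" if "j \<in> bits \<times> bits" for j
    using m that by (auto simp: mu_def sum_bits)
  have q10: "q (1,0) = p 0 * chi (1,0) 0 + p 1 * chi (1,0) 1" using mq b by auto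
  have q11: "q (1,1) = p 0 * chi (1,1) 0 + p 1 * chi (1,1) 1" using mq b by auto
  have q01: "q (0,1) = p 0 * chi (0,1) 0 + p 1 * chi (0,1) 1" using mq b by auto
  have cc: "chi (0,1) 0 \<le> chi (1,0) 0" using c by (simp add: chi1_def chi2_def)
  have x': "x = chi (1,0) 1 + chi (1,1) 1" using x by (simp add: chi1_def)
  have x0: "0 \<le> x" and x1: "x \<le> 1" using x' kk ks1 by linarith+
  have key: "x * (q (0,1) + q (1,1)) \<le> q (1,0) + q (1,1)"
  proof -
    have A: "x * (p 0 * (chi (0,1) 0 + chi (1,1) 0)) \<le> p 0 * (chi (1,0) 0 + chi (1,1) 0)"
    proof -
      have "x * (p 0 * (chi (0,1) 0 + chi (1,1) 0)) \<le> 1 * (p 0 * (chi (0,1) 0 + chi (1,1) 0))"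
        by (rule mult_right_mono[OF x1]) (use p0 kk in auto)
      also have "\<dots> \<le> p 0 * (chi (1,0) 0 + chi (1,1) 0)"
        using cc p0 by (simp add: mult_left_mono)
      finally show ?thesis .
    qed
    have B: "x * (p 1 * (chi (0,1) 1 + chi (1,1) 1)) \<le> x * p 1"
    proof -
      have "p 1 * (chi (0,1) 1 + chi (1,1) 1) \<le> p 1 * 1"
        by (rule mult_left_mono) (use kk ks1 p0 in auto)
      then show ?thesis using x0 by (simp add: mult_left_mono)
    qed
    show ?thesis using A B unfolding q10 q11 q01 x' by (simp add: algebra_simps)
  qed
  have "x \<le> upper_bound q"
  proof (cases "q (0,1) + q (1,1) = 0")
    case True then show ?thesis using x1 by (simp add: upper_bound_def)
  next
    case False
    have "q (0,1) + q (1,1) \<ge> 0" using assms b by (auto simp: prob_on_def)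
    with False have pos: "q (0,1) + q (1,1) > 0" by linarith
    have "x \<le> (q (1,0) + q (1,1)) / (q (0,1) + q (1,1))"
      using key pos by (simp add: pos_le_divide_eq)
    then show ?thesis using x1 False by (simp add: upper_bound_def Let_def)
  qed
  then show "x \<in> {0 .. upper_bound q}" using x0 by simp
qed

end
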